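(* Let $\lambda>1$, $A=\mathrm{diag}(1,\lambda)$, and $f(x)=\tfrac12 x^TAx$ on $\mathbb{R}^2$, with gradient $g(x)=Ax$. Consider the iteration $x_{k+1}=x_k-\alpha_kg_k$, $g_k=Ax_k$, where $x_1\in\mathbb{R}^2$, $x_2=x_1-\alpha_1g_1$ for some $\alpha_1>0$, and for $k\ge 2$ $$\alpha_k=\gamma_k\frac{s_{k-1}^Ts_{k-1}}{s_{k-1}^Ty_{k-1}}+(1-\gamma_k)\frac{s_{k-1}^Ty_{k-1}}{y_{k-1}^Ty_{k-1}},\qquad s_{k-1}=x_k-x_{k-1},\ y_{k-1}=g_k-g_{k-1},$$ with $\gamma_k\in(0,1)$ for all $k$. Assume $g_1^{(i)}\neq0$ and $g_2^{(i)}\ne0$ for $i=1,2$. Let $q_k=(g_k^{(1)})^2/(g_k^{(2)})^2$, $M_k=\log q_k$, let $\theta$ be a root of $\theta^2-\theta+2=0$, and $\xi_k=M_k+(\theta-1)M_{k-1}$. If $|\xi_2|>8\log\lambda$, then there exists $c_1>0$ such that $$|\xi_k|\ge(\sqrt2-1)\,2^{k/2}c_1\quad\text{for all }k\ge 2.$$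
   Context: $g_k^{(i)}$ denotes the $i$-th component of $g_k$. Under these assumptions all $g_k^{(i)}$ remain nonzero, so $q_k$ and $M_k$ are well defined for all $k\ge1$; $\theta=\frac{1\pm\sqrt7\,i}{2}$ is complex and $|\cdot|$ is the complex modulus. *)

theory Defs
  imports "HOL-Analysis.Analysis"
begin

definition Adiag :: "real \<Rightarrow> real^2^2" where
  "Adiag lam = (\<chi> i j. if i = j then (if i = 1 then 1 else lam) else 0)"

definition qratio :: "real^2 \<Rightarrow> real" where
  "qratio g = (g $ 1)^2 / (g $ 2)^2"

definition Mlog :: "real^2 \<Rightarrow> real" where
  "Mlog g = ln (qratio g)"

end

theory Submission imports Defs begin

lemma rgen:
  fixes t a b c d U V :: real
  assumes "t \<noteq> 0" "a \<noteq> 0" "b \<noteq> 0" "c \<noteq> 0" "d \<noteq> 0" "V \<noteq> 0"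
  shows "((t*b^2*U)*c)^2/((-(t*a^2*V))*d)^2 = (c^2/d^2) * ((U/V)^2 / (a^2/b^2)^2)"
  using assms by (simp add: field_simps power2_eq_square)

lemma key:
  fixes a b c d lam ga al :: real
  assumes lam: "lam > 1" and a: "a \<noteq> 0" and b: "b \<noteq> 0" and c: "c \<noteq> 0" and d: "d \<noteq> 0"
    and ga: "0 < ga" "ga < 1"
    and al: "al = ga * ((a^2+b^2)/(a^2+lam*b^2)) + (1-ga) * ((a^2+lam*b^2)/(a^2+lam^2*b^2))"
  shows "al > 0" "1 - al \<noteq> 0" "1 - lam*al \<noteq> 0"
    "\<exists>\<delta>. \<bar>\<delta>\<bar> \<le> 2 * ln lam \<and> ln (((1-al)*c)^2/((1-lam*al)*d)^2) = ln (c^2/d^2) - 2 * ln (a^2/b^2) + \<delta>"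
proof -
  define P where "P = a^2+lam*b^2"
  define Q where "Q = a^2+lam^2*b^2"
  have a2: "a^2 > 0" using a by simp
  have b2: "b^2 > 0" using b by simp
  have P: "P > 0" unfolding P_def using a2 b2 lam by (simp add: add_pos_pos)
  have Q: "Q > 0" unfolding Q_def using a2 b2 lam by (simp add: add_pos_pos)
  define U where "U = ga/P + (1-ga)*lam/Q"
  define V where "V = ga/P + (1-ga)/Q"
  have V: "V > 0" unfolding V_def using P Q ga by (simp add: add_pos_pos)
  have UV1: "U > V" unfolding U_def V_def using P Q ga lam
    by (simp add: divide_strict_right_mono)
  have UV2: "U < lam * V" unfolding U_def V_def using P Q ga lam
    by (simp add: algebra_simps divide_strict_right_mono)
  have f1: "(a^2+b^2)/P = 1 - (lam-1)*b^2/P" using P unfolding P_def by (simp add: field_simps)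
  have f2: "P/Q = 1 - lam*(lam-1)*b^2/Q" using Q unfolding P_def Q_def by (simp add: field_simps power2_eq_square)
  have f3: "lam*((a^2+b^2)/P) = 1 + (lam-1)*a^2/P" using P unfolding P_def by (simp add: field_simps)
  have f4: "lam*(P/Q) = 1 + (lam-1)*a^2/Q" using Q unfolding P_def Q_def by (simp add: field_simps power2_eq_square)
  have al': "al = ga * ((a^2+b^2)/P) + (1-ga) * (P/Q)" unfolding al P_def Q_def ..
  have e1: "1 - al = (lam-1)*b^2*U"
    unfolding al' f1 f2 U_def using P Q by (simp add: field_simps)
  have e2: "1 - lam*al = -((lam-1)*a^2*V)"
  proof -
    have "lam*al = ga * (lam*((a^2+b^2)/P)) + (1-ga) * (lam*(P/Q))" unfolding al' by (simp add: algebra_simps)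
    also have "\<dots> = ga * (1 + (lam-1)*a^2/P) + (1-ga) * (1 + (lam-1)*a^2/Q)" unfolding f3 f4 ..
    finally show ?thesis unfolding V_def using P Q by (simp add: field_simps)
  qed
  show "al > 0" unfolding al using P Q ga a2 b2 unfolding P_def[symmetric] Q_def[symmetric]
    by (intro add_pos_pos mult_pos_pos divide_pos_pos) (auto simp: add_pos_pos)
  show "1 - al \<noteq> 0" using e1 lam b2 V UV1 by simp
  show "1 - lam*al \<noteq> 0" using e2 lam a2 V by simp
  have U: "U > 0" using V UV1 by simp
  have r: "((1-al)*c)^2/((1-lam*al)*d)^2 = (c^2/d^2) * ((U/V)^2 / (a^2/b^2)^2)"
    unfolding e1 e2 by (rule rgen) (use a b c d V lam in auto)
  show "\<exists>\<delta>. \<bar>\<delta>\<bar> \<le> 2 * ln lam \<and> ln (((1-al)*c)^2/((1-lam*al)*d)^2) = ln (c^2/d^2) - 2 * ln (a^2/b^2) + \<delta>"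
  proof (intro exI conjI)
    have l1: "0 < ln (U/V)" using UV1 V by simp
    have l2: "ln (U/V) < ln lam" using UV2 V U lam by (simp add: pos_divide_less_eq)
    show "\<bar>2 * ln (U/V)\<bar> \<le> 2 * ln lam" using l1 l2 by simp
    show "ln (((1-al)*c)^2/((1-lam*al)*d)^2) = ln (c^2/d^2) - 2 * ln (a^2/b^2) + 2 * ln (U/V)"
      unfolding r using a b c d U V by (simp add: ln_mult ln_div ln_realpow)
  qed
qed

lemma comps:
  fixes lam :: real and v :: "real^2"
  shows "(Adiag lam *v v) $ 1 = v $ 1" "(Adiag lam *v v) $ 2 = lam * v $ 2"
  by (simp_all add: Adiag_def matrix_vector_mult_def sum_2)

lemma inner2: fixes u v :: "real^2" shows "u \<bullet> v = u$1 * v$1 + u$2 * v$2"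
  by (simp add: inner_vec_def sum_2)

theorem lemma1:
  fixes lam :: real and x g :: "nat \<Rightarrow> real^2" and alpha gamma :: "nat \<Rightarrow> real"
    and theta :: complex
  assumes lam: "lam > 1"
    and grad: "\<And>k. k \<ge> 1 \<Longrightarrow> g k = Adiag lam *v x k"
    and iter: "\<And>k. k \<ge> 1 \<Longrightarrow> x (Suc k) = x k - alpha k *\<^sub>R g k"
    and alpha1: "alpha 1 > 0"
    and gamma: "\<And>k. k \<ge> 2 \<Longrightarrow> 0 < gamma k \<and> gamma k < 1"
    and alphak: "\<And>k. k \<ge> 2 \<Longrightarrow>
       alpha k = gamma k * (((x k - x (k-1)) \<bullet> (x k - x (k-1))) / ((x k - x (k-1)) \<bullet> (g k - g (k-1))))
               + (1 - gamma k) * (((x k - x (k-1)) \<bullet> (g k - g (k-1))) / ((g k - g (k-1)) \<bullet> (g k - g (k-1))))"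
    and nz: "\<And>i. g 1 $ i \<noteq> 0" "\<And>i. g 2 $ i \<noteq> 0"
    and theta: "theta^2 - theta + 2 = 0"
    and xi2: "cmod (complex_of_real (Mlog (g 2)) + (theta - 1) * complex_of_real (Mlog (g 1))) > 8 * ln lam"
  shows "\<exists>c1>0. \<forall>k\<ge>2. cmod (complex_of_real (Mlog (g k)) + (theta - 1) * complex_of_real (Mlog (g (k-1))))
                         \<ge> (sqrt 2 - 1) * 2 powr (real k / 2) * c1"
proof -
  have g1: "g k $ 1 = x k $ 1" if "k \<ge> 1" for k using grad[OF that] comps by simp
  have g2: "g k $ 2 = lam * x k $ 2" if "k \<ge> 1" for k using grad[OF that] comps by simp
  have gs1: "g (Suc k) $ 1 = (1 - alpha k) * g k $ 1" if "k \<ge> 1" for k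
    using g1[OF that] g1[of "Suc k"] iter[OF that] by (simp add: algebra_simps)
  have gs2: "g (Suc k) $ 2 = (1 - lam * alpha k) * g k $ 2" if "k \<ge> 1" for k
    using g2[OF that] g2[of "Suc k"] iter[OF that] by (simp add: algebra_simps)
  have alf: "alpha k = gamma k * ((a^2+b^2)/(a^2+lam*b^2)) + (1-gamma k) * ((a^2+lam*b^2)/(a^2+lam^2*b^2))"
    if k: "k \<ge> 2" and a: "a = g (k-1) $ 1" and b: "b = g (k-1) $ 2" and be: "alpha (k-1) \<noteq> 0" for k a b
  proof -
    define be where "be = alpha (k-1)"
    have k1: "k - 1 \<ge> 1" and kk: "Suc (k-1) = k" using k by auto
    have s1: "(x k - x (k-1)) $ 1 = - be * a" "(x k - x (k-1)) $ 2 = - be * b"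
      using iter[OF k1] a b unfolding kk be_def by auto
    have y1: "(g k - g (k-1)) $ 1 = - be * a" "(g k - g (k-1)) $ 2 = - be * lam * b"
      using gs1[OF k1] gs2[OF k1] a b unfolding kk be_def by (auto simp: algebra_simps)
    have b0: "be \<noteq> 0" using be be_def by simp
    have "alpha k = gamma k * ((be^2*(a^2+b^2))/(be^2*(a^2+lam*b^2))) + (1-gamma k) * ((be^2*(a^2+lam*b^2))/(be^2*(a^2+lam^2*b^2)))"
      unfolding alphak[OF k] inner2 s1 y1 by (simp add: algebra_simps power2_eq_square)
    then show ?thesis using b0 by simp
  qed
  have stepL: "alpha k > 0 \<and> g (Suc k) $ 1 \<noteq> 0 \<and> g (Suc k) $ 2 \<noteq> 0 \<and>
     (\<exists>\<delta>. \<bar>\<delta>\<bar> \<le> 2 * ln lam \<and> Mlog (g (Suc k)) = Mlog (g k) - 2 * Mlog (g (k-1)) + \<delta>)"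
    if k: "k \<ge> 2" and h: "g (k-1) $ 1 \<noteq> 0" "g (k-1) $ 2 \<noteq> 0" "g k $ 1 \<noteq> 0" "g k $ 2 \<noteq> 0" "alpha (k-1) > 0" for k
  proof -
    have al: "alpha k = gamma k * (((g (k-1) $ 1)^2+(g (k-1) $ 2)^2)/((g (k-1) $ 1)^2+lam*(g (k-1) $ 2)^2))
       + (1-gamma k) * (((g (k-1) $ 1)^2+lam*(g (k-1) $ 2)^2)/((g (k-1) $ 1)^2+lam^2*(g (k-1) $ 2)^2))"
      by (rule alf[OF k refl refl]) (use h in simp)
    note K = key[OF lam h(1) h(2) h(3) h(4) _ _ al] 
    have ga: "0 < gamma k" "gamma k < 1" using gamma[OF k] by auto
    have k1: "k \<ge> 1" using k by simp
    have M: "Mlog (g (Suc k)) = ln (((1 - alpha k) * g k $ 1)^2 / ((1 - lam * alpha k) * g k $ 2)^2)"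
      unfolding Mlog_def qratio_def gs1[OF k1] gs2[OF k1] ..
    have M2: "Mlog (g k) = ln ((g k $ 1)^2 / (g k $ 2)^2)" "Mlog (g (k-1)) = ln ((g (k-1) $ 1)^2 / (g (k-1) $ 2)^2)"
      unfolding Mlog_def qratio_def by simp_all
    show ?thesis unfolding M M2 gs1[OF k1] gs2[OF k1] using K[OF ga] h by simp
  qed
  have inv: "g (k-1) $ 1 \<noteq> 0 \<and> g (k-1) $ 2 \<noteq> 0 \<and> g k $ 1 \<noteq> 0 \<and> g k $ 2 \<noteq> 0 \<and> alpha (k-1) > 0"
    if "k \<ge> 2" for k
    using that
  proof (induction k rule: dec_induct)
    case base
    then show ?case using nz alpha1 by simp
  next
    case (step k)
    then show ?case using stepL[OF step(1)] by simp
  qed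
  define M where "M k = Mlog (g k)" for k
  define xi where "xi k = complex_of_real (M k) + (theta - 1) * complex_of_real (M (k-1))" for k
  define e where "e k = cmod (xi k)" for k
  define L where "L = ln lam"
  have L: "L > 0" unfolding L_def using lam by simp
  have tt: "theta * (theta - 1) = -2" using theta by (simp add: algebra_simps power2_eq_square)
  have ct: "cmod theta = sqrt 2"
  proof -
    have r: "Re theta * Re theta - Im theta * Im theta - Re theta + 2 = 0"
      using arg_cong[OF theta, of Re] by (simp add: power2_eq_square)
    have i: "Re theta * Im theta + Im theta * Re theta - Im theta = 0"
      using arg_cong[OF theta, of Im] by (simp add: power2_eq_square)
    have "Im theta \<noteq> 0"
    proof
      assume "Im theta = 0"
      with r have "(Re theta - 1/2)^2 + 7/4 = 0" by (simp add: power2_eq_square algebra_simps)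
      moreover have "(Re theta - 1/2)^2 + 7/4 > 0" by (simp add: add_nonneg_pos)
      ultimately show False by simp
    qed
    moreover have "Im theta * (2 * Re theta - 1) = 0" using i by (simp add: algebra_simps)
    ultimately have re: "Re theta = 1/2" by simp
    with r have "Im theta * Im theta = 7/4" by simp
    then have "(cmod theta)^2 = 2" unfolding cmod_power2 re by (simp add: power2_eq_square)
    then show ?thesis by (metis norm_ge_zero real_sqrt_unique)
  qed
  have recur: "e (Suc k) \<ge> sqrt 2 * e k - 2 * L" if k: "k \<ge> 2" for k
  proof -
    obtain d where d: "\<bar>d\<bar> \<le> 2 * L" "M (Suc k) = M k - 2 * M (k-1) + d"
      using stepL[OF k] inv[OF k] unfolding M_def L_def by blast
    have "xi (Suc k) = complex_of_real (M k - 2 * M (k-1) + d) + (theta - 1) * complex_of_real (M k)"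
      unfolding xi_def d(2) by simp
    also have "\<dots> = theta * xi k + complex_of_real d"
    proof -
      have "theta * xi k = theta * complex_of_real (M k) + (theta * (theta - 1)) * complex_of_real (M (k-1))"
        unfolding xi_def by (simp add: algebra_simps)
      then show ?thesis unfolding tt by (simp add: algebra_simps)
    qed
    finally have "e (Suc k) = cmod (theta * xi k + complex_of_real d)" unfolding e_def by simp
    moreover have "cmod (theta * xi k) - cmod (complex_of_real d) \<le> cmod (theta * xi k + complex_of_real d)"
      by (rule norm_diff_ineq)
    ultimately show ?thesis using d(1) ct unfolding e_def norm_mult by simp
  qed
  define F where "F = 2 * L / (sqrt 2 - 1)"
  have s54: "5/4 \<le> sqrt 2" by (rule real_le_rsqrt) (simp add: power2_eq_square)
  have sp: "sqrt 2 - 1 > 0" using s54 by simp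
  have FL: "(sqrt 2 - 1) * F = 2 * L" unfolding F_def using sp by simp
  have F8: "F \<le> 8 * L" unfolding F_def using sp s54 L by (simp add: pos_divide_le_eq)
  have F0: "F \<ge> 0" unfolding F_def using sp L by simp
  have e2: "e 2 > 8 * L" using xi2 unfolding e_def xi_def M_def L_def by simp
  have grow: "e k - F \<ge> sqrt 2 ^ (k - 2) * (e 2 - F)" if "k \<ge> 2" for k
    using that
  proof (induction k rule: dec_induct)
    case base then show ?case by simp
  next
    case (step k)
    have "sqrt 2 ^ (Suc k - 2) * (e 2 - F) = sqrt 2 * (sqrt 2 ^ (k - 2) * (e 2 - F))"
    proof -
      have "Suc k - 2 = Suc (k - 2)" using step(1) by simp
      then show ?thesis by simp
    qed
    also have "\<dots> \<le> sqrt 2 * (e k - F)" using step(3) by (simp add: mult_left_mono)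
    also have "\<dots> = sqrt 2 * e k - 2 * L - F" using FL by (simp add: algebra_simps)
    also have "\<dots> \<le> e (Suc k) - F" using recur[OF step(1)] by simp
    finally show ?case .
  qed
  define c1 where "c1 = (e 2 - F) / (2 * (sqrt 2 - 1))"
  have c1: "c1 > 0" unfolding c1_def using e2 F8 sp by simp
  show ?thesis
  proof (intro exI[of _ c1] conjI allI impI c1)
    fix k :: nat assume k: "k \<ge> 2"
    have pw: "2 powr (real k / 2) = sqrt 2 ^ k"
    proof -
      have "sqrt 2 ^ k = sqrt 2 powr real k" by (simp add: powr_realpow)
      also have "\<dots> = (2 powr (1/2)) powr real k" by (simp add: powr_half_sqrt)
      also have "\<dots> = 2 powr (real k / 2)" by (simp add: powr_powr)
      finally show ?thesis by simp
    qed
    have sk: "sqrt 2 ^ k = 2 * sqrt 2 ^ (k - 2)"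
    proof -
      have kk: "k = 2 + (k - 2)" using k by simp
      have "sqrt 2 ^ k = sqrt 2 ^ 2 * sqrt 2 ^ (k - 2)" by (subst kk, subst power_add) simp
      then show ?thesis by simp
    qed
    have "(sqrt 2 - 1) * 2 powr (real k / 2) * c1 = sqrt 2 ^ (k - 2) * (e 2 - F)"
      unfolding pw sk c1_def using sp by (simp add: field_simps)
    also have "\<dots> \<le> e k" using grow[OF k] F0 by simp
    finally show "(sqrt 2 - 1) * 2 powr (real k / 2) * c1 \<le> cmod (complex_of_real (Mlog (g k)) + (theta - 1) * complex_of_real (Mlog (g (k - 1))))"
      unfolding e_def xi_def M_def .
  qed
qed
end
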